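(* For every integer $n \geq 1$, $$P_O(n) - P_E(n) = \sum_{i \geq 1} S(i)\, p(n-i).$$
   Context: $p(m)$ is the number of partitions of $m$, with $p(0)=1$ and $p(m)=0$ for $m<0$. $P_O(n)$ (resp. $P_E(n)$) denotes the number of partitions of $n$ whose smallest part is odd (resp. even). The rank of a partition is its largest part minus its number of parts. For $i \geq 1$, $S(i)$ is the number of partitions of $i$ into distinct parts with even rank minus the number of partitions of $i$ into distinct parts with odd rank. *)

theory Defs
  imports Main "HOL-Library.Multiset"
begin

definition partitions :: "nat \<Rightarrow> nat multiset set" where
  "partitions m = {M. (\<forall>x\<in>#M. 0 < x) \<and> sum_mset M = m}"

definition p :: "int \<Rightarrow> int" where
  "p m = (if m < 0 then 0 else int (card (partitions (nat m))))"

definition P_O :: "nat \<Rightarrow> nat" where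
  "P_O n = card {M \<in> partitions n. M \<noteq> {#} \<and> odd (Min (set_mset M))}"

definition P_E :: "nat \<Rightarrow> nat" where
  "P_E n = card {M \<in> partitions n. M \<noteq> {#} \<and> even (Min (set_mset M))}"

definition distinct_partitions :: "nat \<Rightarrow> nat set set" where
  "distinct_partitions m = {A. finite A \<and> (\<forall>x\<in>A. 0 < x) \<and> \<Sum>A = m}"

definition rank_dp :: "nat set \<Rightarrow> int" where
  "rank_dp A = int (Max A) - int (card A)"

definition S :: "nat \<Rightarrow> int" where
  "S i = int (card {A \<in> distinct_partitions i. even (rank_dp A)})
       - int (card {A \<in> distinct_partitions i. odd (rank_dp A)})"

end

theory Submission imports Defs begin

lemma size_le_sum: "\<forall>x\<in>#M. 0 < (x::nat) \<Longrightarrow> size M \<le> sum_mset M"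
proof (induction M)
  case empty then show ?case by simp
next
  case (add x M) then show ?case by auto
qed

lemma finite_partitions: "finite (partitions m)"
proof -
  have "partitions m \<subseteq> (\<Union>s\<in>{..m}. multisets_of_size {1..m} s)"
  proof
    fix M assume "M \<in> partitions m"
    then have pos: "\<forall>x\<in>#M. 0 < x" and s: "sum_mset M = m" by (auto simp: partitions_def)
    have "set_mset M \<subseteq> {1..m}"
    proof
      fix x assume "x \<in> set_mset M"
      then have "x \<le> sum_mset M" using sum_mset.remove[of x M] by auto
      with pos \<open>x \<in> set_mset M\<close> s show "x \<in> {1..m}" by auto
    qed
    moreover have "size M \<le> m" using size_le_sum[OF pos] s by simp
    ultimately show "M \<in> (\<Union>s\<in>{..m}. multisets_of_size {1..m} s)"
      by (auto simp: multisets_of_size_def)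
  qed
  then show ?thesis by (rule finite_subset) auto
qed

definition G :: "int \<Rightarrow> nat \<Rightarrow> int" where
  "G m k = (if m < 0 then 0 else int (card {M \<in> partitions (nat m). \<forall>x\<in>#M. k \<le> x}))"

lemma G1: "G m 1 = p m"
proof -
  have "{M \<in> partitions (nat m). \<forall>x\<in>#M. 1 \<le> x} = partitions (nat m)"
    by (auto simp: partitions_def)
  then show ?thesis by (simp add: G_def p_def)
qed

lemma Grec:
  assumes "k \<ge> 1"
  shows "G m k = G m (k+1) + G (m - int k) k"
proof (cases "m < 0")
  case True then show ?thesis by (simp add: G_def)
next
  case False
  define X1 where "X1 = {M \<in> partitions (nat m). \<forall>x\<in>#M. k+1 \<le> x}"
  define X2 where "X2 = {M \<in> partitions (nat m). (\<forall>x\<in>#M. k \<le> x) \<and> k \<in># M}"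
  define Y where "Y = {M \<in> partitions (nat (m - int k)). \<forall>x\<in>#M. k \<le> x}"
  have eq: "{M \<in> partitions (nat m). \<forall>x\<in>#M. k \<le> x} = X1 \<union> X2"
    unfolding X1_def X2_def by (auto simp: Suc_le_eq order_le_less)
  have disj: "X1 \<inter> X2 = {}" unfolding X1_def X2_def by auto
  have f1: "finite X1" "finite X2"
    unfolding X1_def X2_def by (auto intro: finite_subset[OF _ finite_partitions])
  have c: "card {M \<in> partitions (nat m). \<forall>x\<in>#M. k \<le> x} = card X1 + card X2"
    unfolding eq by (rule card_Un_disjoint[OF f1 disj])
  have X2Y: "card X2 = (if m - int k < 0 then 0 else card Y)"
  proof (cases "m - int k < 0")
    case True
    have "X2 = {}"
    proof (rule ccontr)
      assume "X2 \<noteq> {}" then obtain M where "M \<in> X2" by auto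
      then have "k \<in># M" "sum_mset M = nat m" by (auto simp: X2_def partitions_def)
      then have "k \<le> nat m" using sum_mset.remove[of k M] by auto
      with True \<open>\<not> m < 0\<close> show False by linarith
    qed
    then show ?thesis using True by simp
  next
    case F2: False
    have "X2 = add_mset k ` Y"
    proof (intro equalityI subsetI)
      fix M assume M: "M \<in> X2"
      then have kM: "k \<in># M" by (auto simp: X2_def)
      have "M = add_mset k (M - {#k#})" using kM by simp
      moreover have "M - {#k#} \<in> Y"
      proof -
        have "sum_mset M = k + sum_mset (M - {#k#})" using sum_mset.remove[OF kM] by simp
        then show ?thesis using M F2 assms False
          by (auto simp: X2_def Y_def partitions_def dest: in_diffD)
      qed
      ultimately show "M \<in> add_mset k ` Y" by blast
    next
      fix M assume "M \<in> add_mset k ` Y"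
      then obtain N where "N \<in> Y" "M = add_mset k N" by auto
      then show "M \<in> X2" using F2 False assms by (auto simp: X2_def Y_def partitions_def)
    qed
    then have "card X2 = card Y" by (simp add: card_image inj_on_def)
    then show ?thesis using F2 by simp
  qed
  show ?thesis using False c X2Y unfolding G_def X1_def Y_def by (auto simp: Suc_le_eq)
qed

lemma IE:
  assumes "k \<ge> 1"
  shows "(\<Sum>B\<in>Pow {1..<k}. (-1::int)^card B * p (m - int (\<Sum>B))) = G m k"
  using assms
proof (induction k arbitrary: m rule: nat_induct_at_least)
  case base
  then show ?case using G1[of m] by simp
next
  case (Suc k)
  have ins: "{1..<Suc k} = insert k {1..<k}" using Suc.hyps by auto
  have fin: "finite (Pow {1..<k})" by simp
  have dis: "Pow {1..<k} \<inter> insert k ` Pow {1..<k} = {}" by auto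
  have inj: "inj_on (insert k) (Pow {1..<k})"
    by (rule inj_onI) (metis Diff_insert_absorb PowD atLeastLessThan_iff less_irrefl subsetD)
  have "(\<Sum>B\<in>Pow {1..<Suc k}. (-1::int)^card B * p (m - int (\<Sum>B)))
      = (\<Sum>B\<in>Pow {1..<k}. (-1::int)^card B * p (m - int (\<Sum>B)))
        + (\<Sum>B\<in>insert k ` Pow {1..<k}. (-1::int)^card B * p (m - int (\<Sum>B)))"
    unfolding ins Pow_insert by (rule sum.union_disjoint) (use dis in auto)
  also have "(\<Sum>B\<in>insert k ` Pow {1..<k}. (-1::int)^card B * p (m - int (\<Sum>B)))
      = (\<Sum>B\<in>Pow {1..<k}. (-1::int)^card (insert k B) * p (m - int (\<Sum>(insert k B))))"
    by (rule sum.reindex[OF inj, unfolded comp_def])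
  also have "\<dots> = - (\<Sum>B\<in>Pow {1..<k}. (-1::int)^card B * p ((m - int k) - int (\<Sum>B)))"
    unfolding sum_negf[symmetric]
  proof (rule sum.cong[OF refl])
    fix B assume "B \<in> Pow {1..<k}"
    then have kB: "k \<notin> B" and fB: "finite B" using finite_subset by auto
    show "(-1::int)^card (insert k B) * p (m - int (\<Sum>(insert k B))) =
          - ((-1::int)^card B * p ((m - int k) - int (\<Sum>B)))"
      using kB fB by (simp add: algebra_simps)
  qed
  finally show ?case using Suc.IH[of m] Suc.IH[of "m - int k"] Grec[OF Suc.hyps, of m]
    by simp
qed

lemma mem_le_sum: "x \<in># (M::nat multiset) \<Longrightarrow> x \<le> sum_mset M"
  using sum_mset.remove[of x M] by auto

lemma card_min:
  assumes "1 \<le> k" "k \<le> n"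
  shows "int (card {M \<in> partitions n. Min (set_mset M) = k}) = G (int n - int k) k"
proof -
  define Y where "Y = {N \<in> partitions (n - k). \<forall>x\<in>#N. k \<le> x}"
  have "{M \<in> partitions n. Min (set_mset M) = k} = add_mset k ` Y"
  proof (intro equalityI subsetI)
    fix M assume M: "M \<in> {M \<in> partitions n. Min (set_mset M) = k}"
    then have pos: "\<forall>x\<in>#M. 0 < x" and s: "sum_mset M = n" and mk: "Min (set_mset M) = k"
      by (auto simp: partitions_def)
    have "M \<noteq> {#}" using s assms by auto
    then have kM: "k \<in># M" using mk Min_in[of "set_mset M"] by auto
    have ge: "\<forall>x\<in>#M. k \<le> x" using mk by auto
    have "M = add_mset k (M - {#k#})" using kM by simp
    moreover have "M - {#k#} \<in> Y"
    proof -
      have "sum_mset M = k + sum_mset (M - {#k#})" using sum_mset.remove[OF kM] by simp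
      then show ?thesis using pos s ge
        by (auto simp: Y_def partitions_def dest: in_diffD)
    qed
    ultimately show "M \<in> add_mset k ` Y" by blast
  next
    fix M assume "M \<in> add_mset k ` Y"
    then obtain N where N: "N \<in> Y" "M = add_mset k N" by auto
    then have "Min (set_mset M) = k"
      by (auto simp: Y_def intro!: Min_eqI)
    then show "M \<in> {M \<in> partitions n. Min (set_mset M) = k}"
      using N assms by (auto simp: Y_def partitions_def)
  qed
  then have "card {M \<in> partitions n. Min (set_mset M) = k} = card Y"
    by (simp add: card_image inj_on_def)
  moreover have "nat (int n - int k) = n - k" using assms by simp
  ultimately show ?thesis using assms unfolding G_def Y_def by simp
qed

lemma LHS:
  assumes "n \<ge> 1"
  shows "int (P_O n) - int (P_E n) = (\<Sum>k=1..n. (-1::int)^(k+1) * G (int n - int k) k)"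
proof -
  define f where "f M = Min (set_mset M)" for M :: "nat multiset"
  have ne: "M \<noteq> {#}" if "M \<in> partitions n" for M using that assms by (auto simp: partitions_def)
  have "P_O n = card {M \<in> partitions n. odd (f M)}"
    unfolding P_O_def f_def using ne by metis
  moreover have "P_E n = card {M \<in> partitions n. even (f M)}"
    unfolding P_E_def f_def using ne by metis
  moreover have "int (card {M \<in> partitions n. P M}) = (\<Sum>M\<in>partitions n. if P M then 1 else 0)" for P
  proof -
    have "int (card {M \<in> partitions n. P M}) = (\<Sum>M\<in>{M \<in> partitions n. P M}. (1::int))" by simp
    also have "\<dots> = (\<Sum>M\<in>partitions n. if P M then 1 else 0)"
      by (rule sum.inter_filter[OF finite_partitions])
    finally show ?thesis .
  qed
  ultimately have "int (P_O n) - int (P_E n) = (\<Sum>M\<in>partitions n. (if odd (f M) then 1 else 0) - (if even (f M) then 1 else 0))"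
    by (simp only: sum_subtractf)
  also have "\<dots> = (\<Sum>M\<in>partitions n. (-1::int)^(f M + 1))"
    by (rule sum.cong[OF refl]) auto
  also have "\<dots> = (\<Sum>k\<in>{1..n}. \<Sum>M\<in>{M \<in> partitions n. f M = k}. (-1::int)^(f M + 1))"
  proof (rule sum.group[symmetric, OF finite_partitions], simp)
    show "f ` partitions n \<subseteq> {1..n}"
    proof
      fix y assume "y \<in> f ` partitions n"
      then obtain M where M: "M \<in> partitions n" "y = f M" by auto
      then have "y \<in># M" using ne[OF M(1)] Min_in[of "set_mset M"] by (auto simp: f_def)
      then show "y \<in> {1..n}" using M mem_le_sum[of y M]
        by (auto simp: partitions_def Suc_le_eq)
    qed
  qed
  also have "\<dots> = (\<Sum>k=1..n. (-1::int)^(k+1) * G (int n - int k) k)"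
  proof (rule sum.cong[OF refl])
    fix k assume k: "k \<in> {1..n}"
    have "(\<Sum>M\<in>{M \<in> partitions n. f M = k}. (-1::int)^(f M + 1))
        = (\<Sum>M\<in>{M \<in> partitions n. f M = k}. (-1::int)^(k + 1))"
      by (rule sum.cong) auto
    also have "\<dots> = (-1::int)^(k+1) * int (card {M \<in> partitions n. f M = k})" by simp
    finally show "(\<Sum>M\<in>{M \<in> partitions n. f M = k}. (-1::int)^(f M + 1)) =
        (-1::int)^(k+1) * G (int n - int k) k"
      using card_min[of k n] k unfolding f_def by simp
  qed
  finally show ?thesis .
qed

definition sg :: "nat set \<Rightarrow> int" where
  "sg A = (if even (rank_dp A) then 1 else -1)"

lemma DP_sub: "distinct_partitions i \<subseteq> Pow {1..i}"
proof
  fix A assume A: "A \<in> distinct_partitions i"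
  then have f: "finite A" and pos: "\<forall>x\<in>A. 0 < x" and s: "\<Sum>A = i"
    by (auto simp: distinct_partitions_def)
  have "x \<le> i" if "x \<in> A" for x using member_le_sum[OF that _ f, of id] s by simp
  then show "A \<in> Pow {1..i}" using pos by (auto simp: Suc_le_eq)
qed

lemma fin_DP: "finite (distinct_partitions i)"
  using DP_sub finite_subset by blast

lemma S_sum: "S i = (\<Sum>A\<in>distinct_partitions i. sg A)"
proof -
  have c: "int (card {A \<in> distinct_partitions i. P A}) = (\<Sum>A\<in>distinct_partitions i. if P A then 1 else 0)" for P
  proof -
    have "int (card {A \<in> distinct_partitions i. P A}) = (\<Sum>A\<in>{A \<in> distinct_partitions i. P A}. (1::int))" by simp
    also have "\<dots> = (\<Sum>A\<in>distinct_partitions i. if P A then 1 else 0)"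
      by (rule sum.inter_filter[OF fin_DP])
    finally show ?thesis .
  qed
  show ?thesis unfolding S_def c sum_subtractf[symmetric]
    by (rule sum.cong[OF refl]) (auto simp: sg_def)
qed

lemma sg_insert:
  assumes "B \<subseteq> {1..<k}"
  shows "sg (insert k B) = (-1::int)^(k+1) * (-1)^card B"
proof -
  have fB: "finite B" using assms finite_subset by blast
  have kB: "k \<notin> B" using assms by auto
  have mx: "Max (insert k B) = k" using assms fB by (auto intro!: Max_eqI)
  have r: "rank_dp (insert k B) = int k - int (card B) - 1"
    unfolding rank_dp_def mx using fB kB by simp
  have "even (int k - int (card B) - 1) = even (k + card B + 1)"
  proof -
    have "int k - int (card B) - 1 = int (k + card B + 1) - 2 * int (card B) - 2" by simp
    then show ?thesis by (metis even_of_nat_iff even_add even_diff dvd_triv_left even_numeral)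
  qed
  then show ?thesis unfolding sg_def r
    by (simp add: power_add[symmetric])
qed

lemma RHS:
  shows "(\<Sum>i=1..n. S i * p (int n - int i)) = (\<Sum>k=1..n. (-1::int)^(k+1) * G (int n - int k) k)"
proof -
  define h where "h A = sg A * p (int n - int (\<Sum>A))" for A
  define D' where "D' = {A \<in> Pow {1..n}. A \<noteq> {} \<and> \<Sum>A \<le> n}"
  define D where "D = Pow {1..n} - {{}}"
  have "(\<Sum>i=1..n. S i * p (int n - int i)) = (\<Sum>i=1..n. \<Sum>A\<in>distinct_partitions i. h A)"
    unfolding S_sum sum_distrib_right h_def
    by (intro sum.cong refl) (auto simp: distinct_partitions_def)
  also have "\<dots> = (\<Sum>i\<in>{1..n}. \<Sum>A\<in>{A \<in> D'. \<Sum>A = i}. h A)"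
  proof (rule sum.cong[OF refl])
    fix i assume i: "i \<in> {1..n}"
    have "distinct_partitions i = {A \<in> D'. \<Sum>A = i}"
    proof (intro equalityI subsetI)
      fix A assume A: "A \<in> distinct_partitions i"
      then have "A \<in> Pow {1..i}" using DP_sub by blast
      moreover have "A \<noteq> {}" using A i by (auto simp: distinct_partitions_def)
      ultimately show "A \<in> {A \<in> D'. \<Sum>A = i}" using A i
        by (auto simp: D'_def distinct_partitions_def)
    next
      fix A assume "A \<in> {A \<in> D'. \<Sum>A = i}"
      then show "A \<in> distinct_partitions i"
        by (auto simp: D'_def distinct_partitions_def intro: finite_subset)
    qed
    then show "(\<Sum>A\<in>distinct_partitions i. h A) = (\<Sum>A\<in>{A \<in> D'. \<Sum>A = i}. h A)" by simp
  qed
  also have "\<dots> = (\<Sum>A\<in>D'. h A)"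
  proof (rule sum.group)
    show "finite D'" unfolding D'_def by simp
    show "Sum ` D' \<subseteq> {1..n}"
    proof
      fix s assume "s \<in> Sum ` D'"
      then obtain A where A: "A \<in> D'" "s = \<Sum>A" by auto
      then obtain x where x: "x \<in> A" by (auto simp: D'_def)
      have "finite A" using A by (auto simp: D'_def intro: finite_subset)
      then have "x \<le> \<Sum>A" using member_le_sum[OF x, of id] by simp
      moreover have "x \<ge> 1" using A x by (auto simp: D'_def)
      ultimately show "s \<in> {1..n}" using A by (auto simp: D'_def)
    qed
  qed simp
  also have "\<dots> = (\<Sum>A\<in>D. h A)"
  proof (rule sum.mono_neutral_left)
    show "finite D" unfolding D_def by simp
    show "D' \<subseteq> D" unfolding D'_def D_def by auto
    show "\<forall>A\<in>D - D'. h A = 0"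
    proof
      fix A assume "A \<in> D - D'"
      then have "\<not> \<Sum>A \<le> n" by (auto simp: D_def D'_def)
      then have "int n - int (\<Sum>A) < 0" by linarith
      then show "h A = 0" unfolding h_def p_def by simp
    qed
  qed
  also have "\<dots> = (\<Sum>k\<in>{1..n}. \<Sum>A\<in>{A \<in> D. Max A = k}. h A)"
  proof (rule sum.group[symmetric])
    show "finite D" unfolding D_def by simp
    show "Max ` D \<subseteq> {1..n}"
    proof
      fix s assume "s \<in> Max ` D"
      then obtain A where A: "A \<in> D" "s = Max A" by auto
      have "finite A" "A \<noteq> {}" using A by (auto simp: D_def intro: finite_subset)
      then have "Max A \<in> A" by simp
      then show "s \<in> {1..n}" using A by (auto simp: D_def)
    qed
  qed simp
  also have "\<dots> = (\<Sum>k=1..n. (-1::int)^(k+1) * G (int n - int k) k)"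
  proof (intro sum.cong refl)
    fix k assume k: "k \<in> {1..n}"
    have fib: "{A \<in> D. Max A = k} = insert k ` Pow {1..<k}"
    proof (intro equalityI subsetI)
      fix A assume A: "A \<in> {A \<in> D. Max A = k}"
      have fA: "finite A" "A \<noteq> {}" using A by (auto simp: D_def intro: finite_subset)
      then have kA: "k \<in> A" using A Max_in by blast
      have "A - {k} \<in> Pow {1..<k}"
      proof (rule PowI, rule subsetI)
        fix x assume x: "x \<in> A - {k}"
        then have "x \<le> k" using A fA by auto
        then show "x \<in> {1..<k}" using x A by (auto simp: D_def)
      qed
      moreover have "A = insert k (A - {k})" using kA by auto
      ultimately show "A \<in> insert k ` Pow {1..<k}" by blast
    next
      fix A assume "A \<in> insert k ` Pow {1..<k}"
      then obtain B where B: "B \<subseteq> {1..<k}" "A = insert k B" by auto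
      have "finite B" using B finite_subset by blast
      then have "Max A = k" using B by (auto intro!: Max_eqI)
      then show "A \<in> {A \<in> D. Max A = k}" using B k by (auto simp: D_def)
    qed
    have inj: "inj_on (insert k) (Pow {1..<k})"
      by (rule inj_onI) (metis Diff_insert_absorb PowD atLeastLessThan_iff less_irrefl subsetD)
    have "(\<Sum>A\<in>{A \<in> D. Max A = k}. h A) = (\<Sum>B\<in>Pow {1..<k}. h (insert k B))"
      unfolding fib by (rule sum.reindex[OF inj, unfolded comp_def])
    also have "\<dots> = (\<Sum>B\<in>Pow {1..<k}. (-1::int)^(k+1) * ((-1)^card B * p ((int n - int k) - int (\<Sum>B))))"
    proof (rule sum.cong[OF refl])
      fix B assume B: "B \<in> Pow {1..<k}"
      then have kB: "k \<notin> B" and fB: "finite B" using finite_subset by auto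
      show "h (insert k B) = (-1::int)^(k+1) * ((-1)^card B * p ((int n - int k) - int (\<Sum>B)))"
        unfolding h_def using sg_insert[of B k] B kB fB by (simp add: algebra_simps)
    qed
    also have "\<dots> = (-1::int)^(k+1) * G (int n - int k) k"
      unfolding sum_distrib_left[symmetric] using IE[of k] k by simp
    finally show "(\<Sum>A\<in>{A \<in> D. Max A = k}. h A) = (-1::int)^(k+1) * G (int n - int k) k" .
  qed
  finally show ?thesis .
qed

theorem theorem4:
  fixes n :: nat
  assumes "n \<ge> 1"
  shows "int (P_O n) - int (P_E n) = (\<Sum>i = 1..n. S i * p (int n - int i))"
  using LHS[OF assms] RHS[of n] by simp

end
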